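(* Let $m,n\in\mathbb{N}$. For $1\le\ell\le m$ let $0<q_{\ell}<1$, $\alpha_{\ell}\ge0$, $r_{\ell},s_{\ell}\in\mathbb{N}_{0}$, and $a_{1,\ell},\dots,a_{r_{\ell},\ell},b_{1,\ell},\dots,b_{s_{\ell},\ell}\in\mathbb{C}$ with \[ \frac{(a_{1,\ell},\dots,a_{r_{\ell},\ell};q_{\ell})_{N}}{(b_{1,\ell},\dots,b_{s_{\ell},\ell};q_{\ell})_{N}}\ge0\quad\text{for all }N\in\mathbb{N}_{0}. \] Let $z_{j,\ell}\in\mathbb{C}$ for $1\le j\le n$, where if $\alpha_{\ell}>0$ the $z_{j,\ell}$ are arbitrary, and if $\alpha_{\ell}=0$ the $z_{j,\ell}$ ($1\le j\le n$) lie in an open disk $\{|z|<R_\ell\}$, $R_\ell<1$, chosen so that the series defining ${}_{r_\ell}A^{(0)}_{s_\ell}$ converges at $w$ whenever $|w|<R_\ell^2$. Then the $n\times n$ matrix \[ \left(\prod_{\ell=1}^{m}{}_{r_{\ell}}A_{s_{\ell}}^{(\alpha_{\ell})}\left(a_{1,\ell},\dots,a_{r_{\ell},\ell};\,b_{1,\ell},\dots,b_{s_{\ell},\ell};\,q_{\ell};\,z_{j,\ell}\overline{z_{k,\ell}}\right)\right)_{j,k=1}^{n} \] is positive semidefinite.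
   Context: For $0<q<1$: $(z;q)_\infty=\prod_{k\ge0}(1-zq^k)$, $(z;q)_N=(z;q)_\infty/(zq^N;q)_\infty$, and $(z_1,\dots,z_r;q)_N=\prod_{i}(z_i;q)_N$. For $\alpha\ge0$, \[ {}_{r}A_{s}^{(\alpha)}(a_{1},\dots,a_{r};\,b_{1},\dots,b_{s};\,q;\,z)=\sum_{N=0}^{\infty}\frac{(a_{1},\dots,a_{r};q)_{N}}{(b_{1},\dots,b_{s};q)_{N}}q^{\alpha N^{2}}z^{N}. \] A complex matrix $A=(a_{j,k})$ is positive semidefinite if $\sum_{j,k}a_{j,k}w_j\overline{w_k}\ge0$ for all complex $w_j$. *)

theory Defs
  imports "HOL-Analysis.Analysis" "HOL-Library.Complex_Order"
begin

definition qpoch :: "complex \<Rightarrow> real \<Rightarrow> nat \<Rightarrow> complex" where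
  "qpoch z q N = (\<Prod>k<N. 1 - z * complex_of_real (q ^ k))"

definition qpoch_multi :: "complex list \<Rightarrow> real \<Rightarrow> nat \<Rightarrow> complex" where
  "qpoch_multi zs q N = (\<Prod>z\<leftarrow>zs. qpoch z q N)"

definition rAs_coeff :: "complex list \<Rightarrow> complex list \<Rightarrow> real \<Rightarrow> nat \<Rightarrow> complex" where
  "rAs_coeff as bs q N = qpoch_multi as q N / qpoch_multi bs q N"

definition rAs_term :: "real \<Rightarrow> complex list \<Rightarrow> complex list \<Rightarrow> real \<Rightarrow> complex \<Rightarrow> nat \<Rightarrow> complex" where
  "rAs_term \<alpha> as bs q z N = rAs_coeff as bs q N * complex_of_real (q powr (\<alpha> * real N ^ 2)) * z ^ N"

definition rAs :: "real \<Rightarrow> complex list \<Rightarrow> complex list \<Rightarrow> real \<Rightarrow> complex \<Rightarrow> complex" where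
  "rAs \<alpha> as bs q z = (\<Sum>N. rAs_term \<alpha> as bs q z N)"

definition psd_matrix :: "nat \<Rightarrow> (nat \<Rightarrow> nat \<Rightarrow> complex) \<Rightarrow> bool" where
  "psd_matrix n M \<longleftrightarrow>
     (\<forall>w :: nat \<Rightarrow> complex. (\<Sum>j\<in>{1..n}. \<Sum>k\<in>{1..n}. M j k * w j * cnj (w k)) \<ge> 0)"

end

theory Submission imports Defs begin

lemma prod_list_map_mult: "(\<Prod>x\<leftarrow>xs. f x * g x) = (\<Prod>x\<leftarrow>xs. f x) * (\<Prod>x\<leftarrow>xs. (g x :: complex))"
  by (induction xs) (auto simp: algebra_simps)

definition rho :: "complex list \<Rightarrow> complex list \<Rightarrow> real \<Rightarrow> nat \<Rightarrow> complex" where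
  "rho as bs q N = (\<Prod>a\<leftarrow>as. 1 - a * complex_of_real (q ^ N)) / (\<Prod>b\<leftarrow>bs. 1 - b * complex_of_real (q ^ N))"

lemma qpoch_multi_Suc: "qpoch_multi zs q (Suc N) = qpoch_multi zs q N * (\<Prod>a\<leftarrow>zs. 1 - a * complex_of_real (q ^ N))"
  unfolding qpoch_multi_def qpoch_def by (simp add: prod_list_map_mult)

lemma coeff_Suc: "rAs_coeff as bs q (Suc N) = rAs_coeff as bs q N * rho as bs q N"
  unfolding rAs_coeff_def rho_def qpoch_multi_Suc by simp

lemma prod_list_tendsto1:
  assumes "0 < q" "q < 1"
  shows "(\<lambda>N. \<Prod>a\<leftarrow>as. 1 - a * complex_of_real (q ^ N)) \<longlonglongrightarrow> 1"
proof (induction as)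
  case Nil then show ?case by simp
next
  case (Cons a as)
  have "(\<lambda>N. complex_of_real (q ^ N)) \<longlonglongrightarrow> of_real 0"
    by (intro tendsto_of_real LIMSEQ_power_zero) (use assms in auto)
  then have "(\<lambda>N. 1 - a * complex_of_real (q ^ N)) \<longlonglongrightarrow> 1 - a * 0"
    by (intro tendsto_intros) auto
  from tendsto_mult[OF this Cons] show ?case by simp
qed

lemma rho_tendsto:
  assumes "0 < q" "q < 1"
  shows "rho as bs q \<longlonglongrightarrow> 1"
  unfolding rho_def using tendsto_divide[OF prod_list_tendsto1[OF assms] prod_list_tendsto1[OF assms]]
  by simp

lemma term_Suc:
  assumes "0 < q"
  shows "rAs_term \<alpha> as bs q w (Suc N) = rAs_term \<alpha> as bs q w N *
     (rho as bs q N * complex_of_real (q powr (\<alpha> * (2 * real N + 1))) * w)"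
proof -
  have "\<alpha> * real (Suc N) ^ 2 = \<alpha> * real N ^ 2 + \<alpha> * (2 * real N + 1)"
    by (simp add: power2_eq_square algebra_simps)
  then have "q powr (\<alpha> * real (Suc N) ^ 2) = q powr (\<alpha> * real N ^ 2) * q powr (\<alpha> * (2 * real N + 1))"
    by (simp add: powr_add)
  then show ?thesis unfolding rAs_term_def coeff_Suc by (simp add: algebra_simps)
qed

lemma summable_term:
  assumes "0 < q" "q < 1" "\<alpha> > 0"
  shows "summable (rAs_term \<alpha> as bs q w)"
proof -
  define r where "r N = rho as bs q N * complex_of_real (q powr (\<alpha> * (2 * real N + 1))) * w" for N
  have eq: "q powr (\<alpha> * (2 * real N + 1)) = (q powr (2*\<alpha>)) ^ N * q powr \<alpha>" for N
  proof -
    have "(q powr (2*\<alpha>)) ^ N = (q powr (2*\<alpha>)) powr real N" using assms by (simp add: powr_realpow)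
    also have "\<dots> = q powr (2*\<alpha>*real N)" by (simp add: powr_powr)
    finally show ?thesis by (simp add: powr_add[symmetric] algebra_simps)
  qed
  have "q powr (2*\<alpha>) < 1 powr (2*\<alpha>)" by (rule powr_less_mono2) (use assms in auto)
  then have "q powr (2*\<alpha>) < 1" by simp
  then have "(\<lambda>N. (q powr (2*\<alpha>)) ^ N) \<longlonglongrightarrow> 0"
    by (intro LIMSEQ_power_zero) (use assms in auto)
  then have "(\<lambda>N. q powr (\<alpha> * (2 * real N + 1))) \<longlonglongrightarrow> 0 * q powr \<alpha>"
    unfolding eq by (rule tendsto_mult[OF _ tendsto_const])
  then have L: "(\<lambda>N. complex_of_real (q powr (\<alpha> * (2 * real N + 1)))) \<longlonglongrightarrow> of_real 0"
    by (intro tendsto_of_real) simp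
  have "r \<longlonglongrightarrow> 1 * of_real 0 * w"
    unfolding r_def by (rule tendsto_mult[OF tendsto_mult[OF rho_tendsto[OF assms(1,2)] L] tendsto_const])
  then have "(\<lambda>N. norm (r N)) \<longlonglongrightarrow> 0" using tendsto_norm by fastforce
  then have "eventually (\<lambda>N. norm (r N) < 1/2) sequentially"
    by (rule order_tendstoD) simp
  then obtain N0 where N0: "\<And>N. N \<ge> N0 \<Longrightarrow> norm (r N) < 1/2"
    by (auto simp: eventually_sequentially)
  show ?thesis
  proof (rule summable_ratio_test[of "1/2" N0])
    fix N assume "N \<ge> N0"
    have "norm (rAs_term \<alpha> as bs q w (Suc N)) = norm (rAs_term \<alpha> as bs q w N) * norm (r N)"
      unfolding term_Suc[OF assms(1)] r_def by (simp add: norm_mult)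
    also have "\<dots> \<le> norm (rAs_term \<alpha> as bs q w N) * (1/2)"
      using N0[OF \<open>N \<ge> N0\<close>] by (intro mult_left_mono) auto
    finally show "norm (rAs_term \<alpha> as bs q w (Suc N)) \<le> 1/2 * norm (rAs_term \<alpha> as bs q w N)"
      by simp
  qed simp
qed

lemma sums_nonneg_complex:
  assumes "\<And>N. (f N :: complex) \<ge> 0" "f sums s"
  shows "s \<ge> 0"
proof -
  have im0: "Im (f N) = 0" and re0: "Re (f N) \<ge> 0" for N using assms(1)[of N] by (auto simp: less_eq_complex_def)
  have "(\<lambda>N. Im (f N)) sums Im s" by (rule sums_Im[OF assms(2)])
  then have "(\<lambda>N. 0) sums Im s" by (simp add: im0)
  then have I: "Im s = 0" using sums_zero sums_unique2 by blast
  have "(\<lambda>N. Re (f N)) sums Re s" by (rule sums_Re[OF assms(2)])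
  then have "0 \<le> Re s" using sums_le[OF _ sums_zero, of "\<lambda>N. Re (f N)"] re0 by blast
  with I show ?thesis by (simp add: less_eq_complex_def)
qed

lemma psd_one: "psd_matrix n (\<lambda>j k. 1)"
  unfolding psd_matrix_def
proof (intro allI)
  fix w :: "nat \<Rightarrow> complex"
  define S where "S = sum w {1..n}"
  have "(\<Sum>j\<in>{1..n}. \<Sum>k\<in>{1..n}. 1 * w j * cnj (w k)) = S * cnj S"
    unfolding S_def by (simp add: sum_distrib_left sum_distrib_right cnj_sum) (rule sum.swap)
  also have "\<dots> = complex_of_real ((cmod S)^2)" by (metis complex_norm_square of_real_power)
  also have "\<dots> \<ge> 0" by (simp add: less_eq_complex_def)
  finally show "(\<Sum>j\<in>{1..n}. \<Sum>k\<in>{1..n}. 1 * w j * cnj (w k)) \<ge> 0" .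
qed

lemma psd_mult:
  assumes K: "psd_matrix n K"
    and S: "\<And>j k. j \<in> {1..n} \<Longrightarrow> k \<in> {1..n} \<Longrightarrow> (\<lambda>N. c N * u N j * cnj (u N k)) sums f j k"
    and c: "\<And>N. c N \<ge> 0"
  shows "psd_matrix n (\<lambda>j k. K j k * f j k)"
  unfolding psd_matrix_def
proof
  fix w :: "nat \<Rightarrow> complex"
  have "(\<lambda>N. \<Sum>j\<in>{1..n}. \<Sum>k\<in>{1..n}. c N * (K j k * (u N j * w j) * cnj (u N k * w k)))
        sums (\<Sum>j\<in>{1..n}. \<Sum>k\<in>{1..n}. K j k * f j k * w j * cnj (w k))"
  proof (intro sums_sum)
    fix j k assume "j \<in> {1..n}" "k \<in> {1..n}"
    from sums_mult[OF S[OF this], of "K j k * w j * cnj (w k)"]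
    show "(\<lambda>N. c N * (K j k * (u N j * w j) * cnj (u N k * w k))) sums (K j k * f j k * w j * cnj (w k))"
      by (simp add: algebra_simps)
  qed
  moreover have "(\<Sum>j\<in>{1..n}. \<Sum>k\<in>{1..n}. c N * (K j k * (u N j * w j) * cnj (u N k * w k))) \<ge> 0" for N
  proof -
    have "(\<Sum>j\<in>{1..n}. \<Sum>k\<in>{1..n}. c N * (K j k * (u N j * w j) * cnj (u N k * w k)))
       = c N * (\<Sum>j\<in>{1..n}. \<Sum>k\<in>{1..n}. K j k * (u N j * w j) * cnj (u N k * w k))"
      by (simp add: sum_distrib_left)
    also have "\<dots> \<ge> 0" using c[of N] K unfolding psd_matrix_def
      by (intro mult_nonneg_nonneg) (auto simp del: complex_cnj_mult)
    finally show ?thesis .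
  qed
  ultimately show "(\<Sum>j\<in>{1..n}. \<Sum>k\<in>{1..n}. K j k * f j k * w j * cnj (w k)) \<ge> 0"
    by (rule sums_nonneg_complex[rotated])
qed

theorem mainTheorem15:
  fixes m n :: nat
    and q \<alpha> R :: "nat \<Rightarrow> real"
    and as bs :: "nat \<Rightarrow> complex list"
    and z :: "nat \<Rightarrow> nat \<Rightarrow> complex"
  assumes q_bounds: "\<And>l. l \<in> {1..m} \<Longrightarrow> 0 < q l \<and> q l < 1"
    and alpha_nonneg: "\<And>l. l \<in> {1..m} \<Longrightarrow> \<alpha> l \<ge> 0"
    and coeff_nonneg: "\<And>l N. l \<in> {1..m} \<Longrightarrow> rAs_coeff (as l) (bs l) (q l) N \<ge> 0"
    and disk: "\<And>l. l \<in> {1..m} \<Longrightarrow> \<alpha> l = 0 \<Longrightarrow>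
        R l < 1 \<and> (\<forall>j\<in>{1..n}. norm (z j l) < R l) \<and>
        (\<forall>w. norm w < (R l)^2 \<longrightarrow> summable (rAs_term 0 (as l) (bs l) (q l) w))"
  shows "psd_matrix n (\<lambda>j k. \<Prod>l\<in>{1..m}. rAs (\<alpha> l) (as l) (bs l) (q l) (z j l * cnj (z k l)))"
proof -
  define F where "F l j k = rAs (\<alpha> l) (as l) (bs l) (q l) (z j l * cnj (z k l))" for l j k
  have "M \<le> m \<Longrightarrow> psd_matrix n (\<lambda>j k. \<Prod>l\<in>{1..M}. F l j k)" for M
  proof (induction M)
    case 0
    then show ?case using psd_one by simp
  next
    case (Suc M)
    define l where "l = Suc M"
    have l: "l \<in> {1..m}" using Suc.prems l_def by auto
    have IH: "psd_matrix n (\<lambda>j k. \<Prod>l\<in>{1..M}. F l j k)" using Suc by simp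
    define c where "c N = rAs_coeff (as l) (bs l) (q l) N * complex_of_real (q l powr (\<alpha> l * real N ^ 2))" for N
    define u where "u N j = z j l ^ N" for N j
    have c: "c N \<ge> 0" for N
      unfolding c_def by (intro mult_nonneg_nonneg coeff_nonneg[OF l]) (simp add: less_eq_complex_def)
    have S: "(\<lambda>N. c N * u N j * cnj (u N k)) sums F l j k" if jk: "j \<in> {1..n}" "k \<in> {1..n}" for j k
    proof -
      have eq: "(\<lambda>N. c N * u N j * cnj (u N k)) = rAs_term (\<alpha> l) (as l) (bs l) (q l) (z j l * cnj (z k l))"
        unfolding c_def u_def rAs_term_def by (rule ext) (simp add: power_mult_distrib mult.assoc)
      have "summable (rAs_term (\<alpha> l) (as l) (bs l) (q l) (z j l * cnj (z k l)))"
      proof (cases "\<alpha> l = 0")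
        case True
        note D = disk[OF l True]
        have zj: "norm (z j l) < R l" and zk: "norm (z k l) < R l" using D jk by auto
        have "norm (z j l) * norm (z k l) < R l * R l"
          by (rule mult_strict_mono[OF zj zk]) (use zj in \<open>auto intro: le_less_trans[OF norm_ge_zero]\<close>)
        then have "norm (z j l * cnj (z k l)) < (R l)^2" by (simp add: power2_eq_square norm_mult)
        then show ?thesis using D True by auto
      next
        case False
        then have "\<alpha> l > 0" using alpha_nonneg[OF l] by simp
        then show ?thesis using summable_term q_bounds[OF l] by blast
      qed
      then show ?thesis unfolding eq F_def rAs_def by (rule summable_sums)
    qed
    have "psd_matrix n (\<lambda>j k. (\<Prod>l\<in>{1..M}. F l j k) * F l j k)"
      by (rule psd_mult[OF IH S c])
    moreover have "(\<lambda>j k. \<Prod>l\<in>{1..Suc M}. F l j k) = (\<lambda>j k. (\<Prod>l\<in>{1..M}. F l j k) * F l j k)"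
      unfolding l_def by (intro ext, subst prod.nat_ivl_Suc') (auto simp: mult.commute)
    ultimately show ?case by (simp only:)
  qed
  then show ?thesis unfolding F_def by simp
qed

end
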